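(* Let $n\ge27$, $\mathcal{X},\mathcal{Y}$ finite with $|\mathcal{X}|,|\mathcal{Y}|\ge2$, $\mathbf{X}$ a random vector on $\mathcal{X}^n$ and $\mathbf{Y}|\mathbf{X}\sim p^n_{Y|X}$. Let $U$ be a discrete random variable with $U,\mathbf{X},\mathbf{Y}$ a Markov chain in that order, let $u$ be in the support of $U$, and let $\mathcal{A}_u$ be the support of $\mathbf{X}$ given $U=u$. If $\log_2 g^n_{Y|X}(\mathcal{A}_u,1-\beta)\le c$ for some $c>0$ and $\beta\in(0,1)$, then $$\Pr\left(h_{\mathbf{Y}|U}(\mathbf{Y}|U)\le\mu+c\,\middle|\,U=u\right)\ge 1-2^{-\mu}-\beta$$ for each $\mu>0$.
   Context: $h_{\mathbf{Y}|U}(\mathbf{y}|u)=-\log_2 p_{\mathbf{Y}|U}(\mathbf{y}|u)$. For $\eta\in(0,1)$ and $\mathcal{A}\subseteq\mathcal{X}^n$, a set $\mathcal{B}\subseteq\mathcal{Y}^n$ is an $\eta$-image of $\mathcal{A}$ by $p_{Y|X}$ if $p^n_{Y|X}(\mathcal{B}|\mathbf{x})\ge\eta$ for all $\mathbf{x}\in\mathcal{A}$; $g^n_{Y|X}(\mathcal{A},\eta)$ is the minimum cardinality of such a set. *)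

theory Defs
  imports "HOL-Probability.Probability"
begin

fun chan_n :: "('x \<Rightarrow> 'y pmf) \<Rightarrow> 'x list \<Rightarrow> 'y list pmf" where
  "chan_n W [] = return_pmf []"
| "chan_n W (x # xs) = do { y \<leftarrow> W x; ys \<leftarrow> chan_n W xs; return_pmf (y # ys) }"

definition is_eta_image :: "('x \<Rightarrow> 'y pmf) \<Rightarrow> nat \<Rightarrow> 'x list set \<Rightarrow> real \<Rightarrow> 'y list set \<Rightarrow> bool" where
  "is_eta_image W n A eta B \<longleftrightarrow>
     B \<subseteq> {ys. length ys = n} \<and> (\<forall>x\<in>A. measure_pmf.prob (chan_n W x) B \<ge> eta)"

definition g_img :: "('x \<Rightarrow> 'y pmf) \<Rightarrow> nat \<Rightarrow> 'x list set \<Rightarrow> real \<Rightarrow> nat" where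
  "g_img W n A eta = (LEAST k. \<exists>B. is_eta_image W n A eta B \<and> finite B \<and> card B = k)"

text \<open>Joint law of (U, X, Y): (U,X) ~ PUX, and Y | X ~ p^n_{Y|X} (Markov chain U - X - Y).\<close>
definition joint :: "('u \<times> 'x list) pmf \<Rightarrow> ('x \<Rightarrow> 'y pmf) \<Rightarrow> ('u \<times> 'x list \<times> 'y list) pmf" where
  "joint PUX W = do { (u, xs) \<leftarrow> PUX; ys \<leftarrow> chan_n W xs; return_pmf (u, xs, ys) }"

definition prob_U :: "('u \<times> 'x list) pmf \<Rightarrow> ('x \<Rightarrow> 'y pmf) \<Rightarrow> 'u \<Rightarrow> real" where
  "prob_U PUX W u = measure_pmf.prob (joint PUX W) {t. fst t = u}"

definition p_YU :: "('u \<times> 'x list) pmf \<Rightarrow> ('x \<Rightarrow> 'y pmf) \<Rightarrow> 'y list \<Rightarrow> 'u \<Rightarrow> real" where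
  "p_YU PUX W ys u = measure_pmf.prob (joint PUX W) {t. fst t = u \<and> snd (snd t) = ys} / prob_U PUX W u"

definition h_YU :: "('u \<times> 'x list) pmf \<Rightarrow> ('x \<Rightarrow> 'y pmf) \<Rightarrow> 'y list \<Rightarrow> 'u \<Rightarrow> real" where
  "h_YU PUX W ys u = - log 2 (p_YU PUX W ys u)"

end

theory Submission
  imports Defs
begin
lemma chan_len: "set_pmf (chan_n W xs) \<subseteq> {ys. length ys = length xs}"
  by (induction xs) auto

lemma joint_em: "emeasure (measure_pmf (joint PUX W)) {t. fst t = u \<and> snd (snd t) \<in> S}
  = (\<integral>\<^sup>+ t. indicator {t. fst t = u} t * emeasure (measure_pmf (chan_n W (snd t))) S \<partial>measure_pmf PUX)"
  unfolding joint_def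
  apply (simp add: case_prod_beta)
  apply (rule nn_integral_cong)
  apply (simp add: map_pmf_def[symmetric] split: split_indicator)
  apply clarify
  apply (subst nn_integral_indicator[symmetric], simp)
  apply (rule nn_integral_cong)
  apply (auto split: split_indicator)
  done

theorem lemma25:
  fixes W :: "'x::finite \<Rightarrow> 'y::finite pmf"
    and PUX :: "('u \<times> 'x list) pmf"
    and n :: nat and u :: 'u and c \<beta> :: real
  assumes "n \<ge> 27"
    and "CARD('x) \<ge> 2" and "CARD('y) \<ge> 2"
    and "\<forall>t \<in> set_pmf PUX. length (snd t) = n"
    and "u \<in> fst ` set_pmf PUX"
    and "c > 0" and "0 < \<beta>" and "\<beta> < 1"
    and "log 2 (real (g_img W n {xs. (u, xs) \<in> set_pmf PUX} (1 - \<beta>))) \<le> c"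
  shows "\<forall>\<mu>>0. measure_pmf.prob (joint PUX W)
                 {t. fst t = u \<and> h_YU PUX W (snd (snd t)) u \<le> \<mu> + c} / prob_U PUX W u
               \<ge> 1 - 2 powr (-\<mu>) - \<beta>"
proof (intro allI impI)
  fix \<mu> :: real assume mu: "\<mu> > 0"
  define A where "A = {xs. (u, xs) \<in> set_pmf PUX}"
  define J where "J = joint PUX W"
  define YN where "YN = {ys::'y list. length ys = n}"
  have finYN: "finite YN"
  proof -
    have "YN = {ys. set ys \<subseteq> UNIV \<and> length ys = n}" unfolding YN_def by auto
    then show ?thesis using finite_lists_length_eq[of "UNIV::'y set" n] by simp
  qed
  have "is_eta_image W n A (1 - \<beta>) YN"
    unfolding is_eta_image_def
  proof (intro conjI ballI)
    show "YN \<subseteq> {ys. length ys = n}" unfolding YN_def by simp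
    fix x assume "x \<in> A"
    then have lx: "length x = n" using assms(4) unfolding A_def by force
    have "measure_pmf.prob (chan_n W x) YN = 1"
      apply (subst measure_pmf.prob_eq_1)
      using chan_len[of W x] lx by (auto simp: AE_measure_pmf_iff YN_def)
    then show "measure_pmf.prob (chan_n W x) YN \<ge> 1 - \<beta>" using assms(7) by simp
  qed
  then have ex: "\<exists>k. \<exists>B. is_eta_image W n A (1 - \<beta>) B \<and> finite B \<and> card B = k"
    using finYN by blast
  obtain B where B: "is_eta_image W n A (1 - \<beta>) B" "finite B"
      "card B = g_img W n A (1 - \<beta>)"
    using LeastI_ex[OF ex] unfolding g_img_def by blast
  obtain x0 where x0: "(u, x0) \<in> set_pmf PUX" using assms(5) by force
  then have "x0 \<in> A" unfolding A_def by simp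
  then have "measure_pmf.prob (chan_n W x0) B \<ge> 1 - \<beta>" using B(1) unfolding is_eta_image_def by blast
  then have "B \<noteq> {}" using assms(8) by auto
  then have cpos: "real (card B) > 0" using B(2) by (simp add: card_gt_0_iff)
  have cB: "real (card B) \<le> 2 powr c"
    using assms(9) B(3) cpos unfolding A_def by (simp add: log_le_iff)
  define Pu where "Pu = prob_U PUX W u"
  have PuPUX: "Pu = measure_pmf.prob PUX {t. fst t = u}"
  proof -
    have "emeasure (measure_pmf J) {t. fst t = u \<and> snd (snd t) \<in> UNIV}
        = (\<integral>\<^sup>+ t. indicator {t. fst t = u} t \<partial>measure_pmf PUX)"
      unfolding J_def joint_em by (simp add: measure_pmf.emeasure_space_1)
    also have "\<dots> = emeasure (measure_pmf PUX) {t. fst t = u}" by simp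
    finally show ?thesis unfolding Pu_def prob_U_def J_def
      by (simp add: measure_pmf.emeasure_eq_measure)
  qed
  have Pupos: "Pu > 0"
  proof -
    have "pmf PUX (u, x0) > 0" using x0 by (simp add: pmf_positive)
    also have "pmf PUX (u, x0) = measure_pmf.prob PUX {(u, x0)}" by (simp add: measure_pmf_single)
    also have "\<dots> \<le> measure_pmf.prob PUX {t. fst t = u}"
      by (rule measure_pmf.finite_measure_mono) auto
    finally show ?thesis using PuPUX by simp
  qed
  define PB where "PB = measure_pmf.prob J {t. fst t = u \<and> snd (snd t) \<in> B}"
  have PBge: "PB \<ge> (1 - \<beta>) * Pu"
  proof -
    have "ennreal ((1 - \<beta>) * Pu) = (\<integral>\<^sup>+ t. indicator {t. fst t = u} t * ennreal (1 - \<beta>) \<partial>measure_pmf PUX)"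
    proof -
      have "(\<integral>\<^sup>+ t. indicator {t. fst t = u} t * ennreal (1 - \<beta>) \<partial>measure_pmf PUX)
          = (\<integral>\<^sup>+ t. ennreal (1 - \<beta>) * indicator {t. fst t = u} t \<partial>measure_pmf PUX)"
        by (simp add: mult.commute)
      also have "\<dots> = ennreal (1 - \<beta>) * emeasure (measure_pmf PUX) {t. fst t = u}"
        by (rule nn_integral_cmult_indicator) simp
      finally show ?thesis
        using PuPUX assms(8) Pupos
        by (simp add: measure_pmf.emeasure_eq_measure ennreal_mult')
    qed
    also have "\<dots> \<le> (\<integral>\<^sup>+ t. indicator {t. fst t = u} t * emeasure (measure_pmf (chan_n W (snd t))) B \<partial>measure_pmf PUX)"
    proof (rule nn_integral_mono_AE)
      show "AE t in measure_pmf PUX. indicator {t. fst t = u} t * ennreal (1 - \<beta>)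
          \<le> indicator {t. fst t = u} t * emeasure (measure_pmf (chan_n W (snd t))) B"
        unfolding AE_measure_pmf_iff
      proof
        fix t assume t: "t \<in> set_pmf PUX"
        show "indicator {t. fst t = u} t * ennreal (1 - \<beta>)
          \<le> indicator {t. fst t = u} t * emeasure (measure_pmf (chan_n W (snd t))) B"
        proof (cases "fst t = u")
          case True
          then have "snd t \<in> A" using t unfolding A_def by (cases t) auto
          then have "measure_pmf.prob (chan_n W (snd t)) B \<ge> 1 - \<beta>"
            using B(1) unfolding is_eta_image_def by blast
          then show ?thesis using True
            by (simp add: measure_pmf.emeasure_eq_measure)
        qed simp
      qed
    qed
    also have "\<dots> = emeasure (measure_pmf J) {t. fst t = u \<and> snd (snd t) \<in> B}"
      unfolding J_def joint_em ..
    finally show ?thesis unfolding PB_def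
      using Pupos assms(8)
      by (simp add: measure_pmf.emeasure_eq_measure)
  qed
  define G where "G = {y \<in> B. p_YU PUX W y u < 2 powr (-\<mu>-c)}"
  have finG: "finite G" using B(2) unfolding G_def by simp
  define PG where "PG = measure_pmf.prob J {t. fst t = u \<and> snd (snd t) \<in> G}"
  have PGle: "PG \<le> 2 powr (-\<mu>) * Pu"
  proof -
    have eq: "{t. fst t = u \<and> snd (snd t) \<in> G} = (\<Union>y\<in>G. {t. fst t = u \<and> snd (snd t) = y})" by auto
    have "PG = (\<Sum>y\<in>G. measure_pmf.prob J {t. fst t = u \<and> snd (snd t) = y})"
      unfolding PG_def eq
      by (rule measure_finite_Union[OF finG]) (auto simp: disjoint_family_on_def measure_pmf.emeasure_eq_measure)
    also have "\<dots> = (\<Sum>y\<in>G. p_YU PUX W y u * Pu)"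
      using Pupos unfolding p_YU_def Pu_def J_def by simp
    also have "\<dots> \<le> (\<Sum>y\<in>G. 2 powr (-\<mu>-c) * Pu)"
      by (rule sum_mono) (use Pupos in \<open>auto simp: G_def\<close>)
    also have "\<dots> = real (card G) * 2 powr (-\<mu>-c) * Pu" by simp
    also have "\<dots> \<le> real (card B) * 2 powr (-\<mu>-c) * Pu"
    proof -
      have "card G \<le> card B" using B(2) unfolding G_def by (intro card_mono) auto
      then show ?thesis using Pupos by (intro mult_right_mono) auto
    qed
    also have "\<dots> \<le> 2 powr c * 2 powr (-\<mu>-c) * Pu"
      using cB Pupos by (intro mult_right_mono) auto
    also have "\<dots> = 2 powr (-\<mu>) * Pu" by (simp add: powr_add[symmetric])
    finally show ?thesis .
  qed
  define E where "E = {t::('u \<times> 'x list \<times> 'y list). fst t = u \<and> h_YU PUX W (snd (snd t)) u \<le> \<mu> + c}"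
  have sub: "{t::('u \<times> 'x list \<times> 'y list). fst t = u \<and> snd (snd t) \<in> B} \<subseteq> E \<union> {t. fst t = u \<and> snd (snd t) \<in> G}"
  proof
    fix t :: "'u \<times> 'x list \<times> 'y list" assume t: "t \<in> {t. fst t = u \<and> snd (snd t) \<in> B}"
    show "t \<in> E \<union> {t. fst t = u \<and> snd (snd t) \<in> G}"
    proof (cases "snd (snd t) \<in> G")
      case False
      then have p: "p_YU PUX W (snd (snd t)) u \<ge> 2 powr (-\<mu>-c)" using t unfolding G_def by auto
      then have "p_YU PUX W (snd (snd t)) u > 0" by (smt (verit) powr_gt_zero)
      then have "-\<mu>-c \<le> log 2 (p_YU PUX W (snd (snd t)) u)" using p by (simp add: le_log_iff)
      then show ?thesis using t unfolding E_def h_YU_def by auto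
    qed (use t in auto)
  qed
  have "PB \<le> measure_pmf.prob J E + PG"
    unfolding PB_def PG_def
    using measure_pmf.finite_measure_mono[OF sub, of J] measure_subadditive[of E "measure_pmf J" "{t. fst t = u \<and> snd (snd t) \<in> G}"]
    by auto
  then have "measure_pmf.prob J E \<ge> (1 - \<beta> - 2 powr (-\<mu>)) * Pu"
    using PBge PGle by (simp add: algebra_simps)
  then have "measure_pmf.prob J E / Pu \<ge> 1 - \<beta> - 2 powr (-\<mu>)"
    using Pupos by (simp add: pos_le_divide_eq)
  then show "measure_pmf.prob (joint PUX W) {t. fst t = u \<and> h_YU PUX W (snd (snd t)) u \<le> \<mu> + c} / prob_U PUX W u
               \<ge> 1 - 2 powr (-\<mu>) - \<beta>"
    unfolding J_def E_def Pu_def by simp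
qed
end
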